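(* Let $k\ge 0$ and let $G$ be a graph that is $K_\ell$-free for some $\ell\le k+2$. Then $G$ is an interval graph if and only if $G$ is a bar $k$-visibility graph.
   Context: A bar $k$-visibility representation is a finite collection of pairwise disjoint closed horizontal line segments (bars) in the plane; two bars are joined by a line of sight if there is a vertical segment with endpoints on the two bars intersecting at most $k$ other bars. The bar $k$-visibility graph has one vertex per bar, two vertices adjacent iff their bars are joined by a line of sight. An interval graph here is the graph obtained from such a collection of bars where two bars are adjacent whenever some vertical segment joins them, regardless of how many bars it passes through. A graph is $K_\ell$-free if it contains no complete subgraph on $\ell$ vertices. *)

theory Defs
  imports Complex_Main
begin

text \<open>A bar is a closed horizontal segment [left, right] x {height}, encoded as
  (left, right, height) with left < right.\<close>
type_synonym bar = "real \<times> real \<times> real"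

definition bar_left :: "bar \<Rightarrow> real" where "bar_left b = fst b"
definition bar_right :: "bar \<Rightarrow> real" where "bar_right b = fst (snd b)"
definition bar_y :: "bar \<Rightarrow> real" where "bar_y b = snd (snd b)"

definition bar_points :: "bar \<Rightarrow> (real \<times> real) set" where
  "bar_points b = {(x, bar_y b) | x. bar_left b \<le> x \<and> x \<le> bar_right b}"

definition bar_repr :: "'a set \<Rightarrow> ('a \<Rightarrow> bar) \<Rightarrow> bool" where
  "bar_repr V b \<longleftrightarrow>
     (\<forall>v\<in>V. bar_left (b v) < bar_right (b v)) \<and>
     (\<forall>u\<in>V. \<forall>v\<in>V. u \<noteq> v \<longrightarrow> bar_points (b u) \<inter> bar_points (b v) = {})"

definition vseg :: "real \<Rightarrow> real \<Rightarrow> real \<Rightarrow> (real \<times> real) set" where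
  "vseg x y1 y2 = {(x, y) | y. min y1 y2 \<le> y \<and> y \<le> max y1 y2}"

definition k_sight :: "nat \<Rightarrow> 'a set \<Rightarrow> ('a \<Rightarrow> bar) \<Rightarrow> 'a \<Rightarrow> 'a \<Rightarrow> bool" where
  "k_sight k V b u v \<longleftrightarrow>
     (\<exists>x. (x, bar_y (b u)) \<in> bar_points (b u) \<and> (x, bar_y (b v)) \<in> bar_points (b v) \<and>
          card {w \<in> V - {u, v}. vseg x (bar_y (b u)) (bar_y (b v)) \<inter> bar_points (b w) \<noteq> {}} \<le> k)"

definition any_sight :: "('a \<Rightarrow> bar) \<Rightarrow> 'a \<Rightarrow> 'a \<Rightarrow> bool" where
  "any_sight b u v \<longleftrightarrow>
     (\<exists>x. (x, bar_y (b u)) \<in> bar_points (b u) \<and> (x, bar_y (b v)) \<in> bar_points (b v))"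

definition simple_graph :: "'a set \<Rightarrow> ('a \<Rightarrow> 'a \<Rightarrow> bool) \<Rightarrow> bool" where
  "simple_graph V E \<longleftrightarrow> finite V \<and> (\<forall>u v. E u v \<longrightarrow> u \<in> V \<and> v \<in> V \<and> u \<noteq> v \<and> E v u)"

definition bar_k_visibility_graph :: "nat \<Rightarrow> 'a set \<Rightarrow> ('a \<Rightarrow> 'a \<Rightarrow> bool) \<Rightarrow> bool" where
  "bar_k_visibility_graph k V E \<longleftrightarrow>
     (\<exists>b. bar_repr V b \<and> (\<forall>u\<in>V. \<forall>v\<in>V. u \<noteq> v \<longrightarrow> (E u v \<longleftrightarrow> k_sight k V b u v)))"

definition bar_interval_graph :: "'a set \<Rightarrow> ('a \<Rightarrow> 'a \<Rightarrow> bool) \<Rightarrow> bool" where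
  "bar_interval_graph V E \<longleftrightarrow>
     (\<exists>b. bar_repr V b \<and> (\<forall>u\<in>V. \<forall>v\<in>V. u \<noteq> v \<longrightarrow> (E u v \<longleftrightarrow> any_sight b u v)))"

definition K_free :: "nat \<Rightarrow> 'a set \<Rightarrow> ('a \<Rightarrow> 'a \<Rightarrow> bool) \<Rightarrow> bool" where
  "K_free l V E \<longleftrightarrow>
     \<not> (\<exists>S \<subseteq> V. card S = l \<and> (\<forall>u\<in>S. \<forall>v\<in>S. u \<noteq> v \<longrightarrow> E u v))"

end

theory Submission
  imports Defs
begin

lemma mem_bar: "(x,y) \<in> bar_points c \<longleftrightarrow> y = bar_y c \<and> bar_left c \<le> x \<and> x \<le> bar_right c"
  by (auto simp: bar_points_def)

lemma vseg_bar: "vseg x y1 y2 \<inter> bar_points c \<noteq> {} \<longleftrightarrow>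
   bar_left c \<le> x \<and> x \<le> bar_right c \<and> min y1 y2 \<le> bar_y c \<and> bar_y c \<le> max y1 y2"
  by (auto simp: bar_points_def vseg_def)

lemma down_closed:
  fixes f :: "'a \<Rightarrow> real"
  assumes "finite A"
  shows "l \<le> card A \<Longrightarrow> \<exists>S\<subseteq>A. card S = l \<and> (\<forall>a\<in>A. \<forall>s\<in>S. f a < f s \<longrightarrow> a \<in> S)"
proof (induction l)
  case 0
  then show ?case by auto
next
  case (Suc l)
  then obtain S where S: "S \<subseteq> A" "card S = l" "\<forall>a\<in>A. \<forall>s\<in>S. f a < f s \<longrightarrow> a \<in> S" by auto
  have fS: "finite S" using S(1) assms finite_subset by auto
  have "A - S \<noteq> {}" using S Suc.prems by auto
  moreover have fin: "finite (A - S)" using assms by auto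
  ultimately have "Min (f ` (A - S)) \<in> f ` (A - S)" by auto
  then obtain m where m: "m \<in> A - S" "f m = Min (f ` (A - S))" by auto
  have mmin: "\<forall>a\<in>A - S. f m \<le> f a" using m(2) fin by auto
  show ?case
  proof (intro exI[of _ "insert m S"] conjI)
    show "insert m S \<subseteq> A" using S m by auto
    show "card (insert m S) = Suc l" using S m fS by auto
    show "\<forall>a\<in>A. \<forall>s\<in>insert m S. f a < f s \<longrightarrow> a \<in> insert m S"
    proof (intro ballI impI)
      fix a s assume a: "a \<in> A" and s: "s \<in> insert m S" and le: "f a < f s"
      show "a \<in> insert m S"
      proof (cases "s \<in> S")
        case True then show ?thesis using S(3) a le by auto
      next
        case False
        then have "s = m" using s by auto
        show ?thesis
        proof (rule ccontr)
          assume "a \<notin> insert m S"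
          then have "a \<in> A - S" using a by auto
          then have "f m \<le> f a" using mmin by auto
          with le \<open>s = m\<close> show False by auto
        qed
      qed
    qed
  qed
qed


definition inr :: "real \<Rightarrow> bar \<Rightarrow> bool" where
  "inr x c \<longleftrightarrow> bar_left c \<le> x \<and> x \<le> bar_right c"

lemma cross_bound:
  assumes "finite V" "u \<in> V" "v \<in> V" "u \<noteq> v" "inr x (b u)" "inr x (b v)"
    "card {w\<in>V. inr x (b w)} < l" "l \<le> k + 2"
  shows "card {w \<in> V - {u, v}. vseg x (bar_y (b u)) (bar_y (b v)) \<inter> bar_points (b w) \<noteq> {}} \<le> k"
proof -
  let ?C = "{w\<in>V. inr x (b w)}"
  have sub: "{w \<in> V - {u, v}. vseg x (bar_y (b u)) (bar_y (b v)) \<inter> bar_points (b w) \<noteq> {}} \<subseteq> ?C - {u,v}"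
    by (auto simp: vseg_bar inr_def)
  have fC: "finite ?C" using assms(1) by auto
  have "card (?C - {u,v}) = card ?C - 2" using assms fC by (simp add: card_Diff_subset)
  moreover have "card {w \<in> V - {u, v}. vseg x (bar_y (b u)) (bar_y (b v)) \<inter> bar_points (b w) \<noteq> {}} \<le> card (?C - {u,v})"
    using sub fC by (intro card_mono) auto
  ultimately show ?thesis using assms(7,8) by linarith
qed

lemma any_from_k: "k_sight k V b u v \<Longrightarrow> any_sight b u v"
  by (auto simp: k_sight_def any_sight_def)

lemma any_inr: "any_sight b u v \<longleftrightarrow> (\<exists>x. inr x (b u) \<and> inr x (b v))"
  by (auto simp: any_sight_def mem_bar inr_def)

lemma k_from_any:
  assumes "finite V" "u \<in> V" "v \<in> V" "u \<noteq> v" "any_sight b u v"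
    "\<forall>x. card {w\<in>V. inr x (b w)} < l" "l \<le> k + 2"
  shows "k_sight k V b u v"
proof -
  obtain x where x: "inr x (b u)" "inr x (b v)" using assms(5) any_inr by metis
  have "card {w \<in> V - {u, v}. vseg x (bar_y (b u)) (bar_y (b v)) \<inter> bar_points (b w) \<noteq> {}} \<le> k"
    using cross_bound[OF assms(1-4) x] assms(6,7) by blast
  then show ?thesis using x unfolding k_sight_def by (auto simp: mem_bar inr_def)
qed

lemma disj_lemma:
  assumes "bar_repr V b" "u \<in> V" "v \<in> V" "u \<noteq> v" "inr x (b u)" "inr x (b v)"
  shows "bar_y (b u) \<noteq> bar_y (b v)"
proof
  assume h: "bar_y (b u) = bar_y (b v)"
  have "(x, bar_y (b u)) \<in> bar_points (b u) \<inter> bar_points (b v)" using h assms by (auto simp: mem_bar inr_def)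
  moreover have "bar_points (b u) \<inter> bar_points (b v) = {}" using assms(1-4) unfolding bar_repr_def by blast
  ultimately show False by blast
qed

theorem mainTheorem11:
  fixes k :: nat and V :: "'a set" and E :: "'a \<Rightarrow> 'a \<Rightarrow> bool"
  assumes "simple_graph V E"
    and "\<exists>l \<le> k + 2. K_free l V E"
  shows "bar_interval_graph V E \<longleftrightarrow> bar_k_visibility_graph k V E"
proof -
  obtain l where l: "l \<le> k + 2" "K_free l V E" using assms(2) by auto
  have fV: "finite V" using assms(1) by (simp add: simple_graph_def)
  show ?thesis
  proof
    assume "bar_interval_graph V E"
    then obtain b where b: "bar_repr V b" "\<forall>u\<in>V. \<forall>v\<in>V. u \<noteq> v \<longrightarrow> (E u v \<longleftrightarrow> any_sight b u v)"
      by (auto simp: bar_interval_graph_def)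
    have cb: "\<forall>x. card {w\<in>V. inr x (b w)} < l"
    proof (rule allI, rule ccontr)
      fix x assume "\<not> card {w\<in>V. inr x (b w)} < l"
      then have hl: "l \<le> card {w\<in>V. inr x (b w)}" by simp
      obtain S where S: "S \<subseteq> {w\<in>V. inr x (b w)}" "card S = l"
        using obtain_subset_with_card_n[OF hl] by auto
      have "\<forall>p\<in>S. \<forall>q\<in>S. p \<noteq> q \<longrightarrow> E p q"
      proof (intro ballI impI)
        fix p q assume pq: "p \<in> S" "q \<in> S" "p \<noteq> q"
        then have "inr x (b p)" "inr x (b q)" "p \<in> V" "q \<in> V" using S(1) by auto
        then have "any_sight b p q" unfolding any_inr by blast
        then show "E p q" using b(2) pq \<open>p \<in> V\<close> \<open>q \<in> V\<close> by blast
      qed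
      then have "\<exists>S\<subseteq>V. card S = l \<and> (\<forall>u\<in>S. \<forall>v\<in>S. u \<noteq> v \<longrightarrow> E u v)"
        using S by (intro exI[of _ S]) auto
      then show False using l(2) unfolding K_free_def by simp
    qed
    show "bar_k_visibility_graph k V E"
      unfolding bar_k_visibility_graph_def
    proof (intro exI[of _ b] conjI ballI impI)
      show "bar_repr V b" using b(1) .
      fix u v assume uv: "u \<in> V" "v \<in> V" "u \<noteq> v"
      show "E u v \<longleftrightarrow> k_sight k V b u v"
      proof
        assume "E u v" then have "any_sight b u v" using b(2) uv by blast
        then show "k_sight k V b u v" using k_from_any[OF fV uv _ cb l(1)] by blast
      next
        assume "k_sight k V b u v" then have "any_sight b u v" by (rule any_from_k)
        then show "E u v" using b(2) uv by blast
      qed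
    qed
  next
    assume "bar_k_visibility_graph k V E"
    then obtain b where b: "bar_repr V b" "\<forall>u\<in>V. \<forall>v\<in>V. u \<noteq> v \<longrightarrow> (E u v \<longleftrightarrow> k_sight k V b u v)"
      by (auto simp: bar_k_visibility_graph_def)
    have disj: "\<And>u v. u \<in> V \<Longrightarrow> v \<in> V \<Longrightarrow> u \<noteq> v \<Longrightarrow> inr x (b u) \<Longrightarrow> inr x (b v) \<Longrightarrow> bar_y (b u) \<noteq> bar_y (b v)" for x
      by (rule disj_lemma[OF b(1)])
    have cb: "\<forall>x. card {w\<in>V. inr x (b w)} < l"
    proof (rule allI, rule ccontr)
      fix x assume "\<not> card {w\<in>V. inr x (b w)} < l"
      then have hl: "l \<le> card {w\<in>V. inr x (b w)}" by simp
      have fC: "finite {w\<in>V. inr x (b w)}" using fV by simp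
      from down_closed[OF fC hl, of "\<lambda>w. bar_y (b w)"]
      obtain S where S: "S \<subseteq> {w\<in>V. inr x (b w)}" "card S = l"
        and dc: "\<forall>a\<in>{w\<in>V. inr x (b w)}. \<forall>s\<in>S. bar_y (b a) < bar_y (b s) \<longrightarrow> a \<in> S"
        by blast
      have fS: "finite S" using S(1) fC finite_subset by blast
      have "\<forall>p\<in>S. \<forall>q\<in>S. p \<noteq> q \<longrightarrow> E p q"
      proof (intro ballI impI)
        fix p q assume pq: "p \<in> S" "q \<in> S" "p \<noteq> q"
        have sub: "{w \<in> V - {p, q}. vseg x (bar_y (b p)) (bar_y (b q)) \<inter> bar_points (b w) \<noteq> {}} \<subseteq> S - {p,q}"
        proof
          fix w assume "w \<in> {w \<in> V - {p, q}. vseg x (bar_y (b p)) (bar_y (b q)) \<inter> bar_points (b w) \<noteq> {}}"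
          then have w: "w \<in> V" "w \<noteq> p" "w \<noteq> q" "inr x (b w)"
            "bar_y (b w) \<le> max (bar_y (b p)) (bar_y (b q))"
            by (auto simp: vseg_bar inr_def)
          have "bar_y (b w) \<noteq> bar_y (b p)" using disj[of w p] w pq S(1) by auto
          moreover have "bar_y (b w) \<noteq> bar_y (b q)" using disj[of w q] w pq S(1) by auto
          ultimately have "bar_y (b w) < bar_y (b p) \<or> bar_y (b w) < bar_y (b q)" using w(5) by linarith
          then show "w \<in> S - {p,q}" using dc w pq by auto
        qed
        have "card (S - {p,q}) = l - 2" using pq fS S(2) by (simp add: card_Diff_subset)
        moreover have "card {w \<in> V - {p, q}. vseg x (bar_y (b p)) (bar_y (b q)) \<inter> bar_points (b w) \<noteq> {}} \<le> card (S - {p,q})"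
          using sub fS by (intro card_mono) auto
        ultimately have "card {w \<in> V - {p, q}. vseg x (bar_y (b p)) (bar_y (b q)) \<inter> bar_points (b w) \<noteq> {}} \<le> k"
          using l(1) by linarith
        moreover have "inr x (b p)" "inr x (b q)" using pq S(1) by auto
        ultimately have "k_sight k V b p q" unfolding k_sight_def by (auto simp: mem_bar inr_def)
        then show "E p q" using b(2) pq S(1) by auto
      qed
      then have "\<exists>S\<subseteq>V. card S = l \<and> (\<forall>u\<in>S. \<forall>v\<in>S. u \<noteq> v \<longrightarrow> E u v)"
        using S by (intro exI[of _ S]) auto
      then show False using l(2) unfolding K_free_def by simp
    qed
    show "bar_interval_graph V E"
      unfolding bar_interval_graph_def
    proof (intro exI[of _ b] conjI ballI impI)
      show "bar_repr V b" using b(1) .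
      fix u v assume uv: "u \<in> V" "v \<in> V" "u \<noteq> v"
      show "E u v \<longleftrightarrow> any_sight b u v"
      proof
        assume "E u v" then have "k_sight k V b u v" using b(2) uv by blast
        then show "any_sight b u v" by (rule any_from_k)
      next
        assume "any_sight b u v"
        then have "k_sight k V b u v" using k_from_any[OF fV uv _ cb l(1)] by blast
        then show "E u v" using b(2) uv by blast
      qed
    qed
  qed
qed

end
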